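(* The Doob--Martin kernel of $(U_n)_{n \in \mathbb{N}_0}$ with reference state the empty word satisfies, for all $m,n\in\mathbb{N}_0$, $v \in \mathbb{W}_m$ and $w \in \mathbb{W}_{m+n}$, \[ K(v,w) = \binom{w}{v} \frac{\binom{2m}{m}}{\binom{m+n}{m}^2}. \]
   Context: For $n \in \mathbb{N}_0$, $\mathbb{W}_n$ denotes the set of words over the alphabet $\{a,b\}$ with exactly $n$ letters $a$ and $n$ letters $b$, and $\mathbb{W} := \bigsqcup_{n} \mathbb{W}_n$. For words $w,v$, $\binom{w}{v}$ denotes the number of occurrences of $v$ as a (not necessarily contiguous) sub-word of $w$. The Markov chain $(U_n)_{n\in\mathbb{N}_0}$ on $\mathbb{W}$ starts at the empty word $\emptyset$; given $U_n \in \mathbb{W}_n$, first a letter $a$ is inserted uniformly at random into one of the $2n+1$ slots of $U_n$, then a letter $b$ is inserted uniformly at random into one of the $2n+2$ slots of the resulting word, giving $U_{n+1}$. The Doob--Martin kernel with reference state $\emptyset$ is $K(v,w) := \mathbb{P}^v\{\text{the chain hits } w\}/\mathbb{P}^\emptyset\{\text{the chain hits } w\}$; for $v\in\mathbb{W}_m$, $w\in\mathbb{W}_{m+n}$ this equals $\mathbb{P}\{U_{m+n}=w\mid U_m=v\}/\mathbb{P}\{U_{m+n}=w\mid U_0=\emptyset\}$. *)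

theory Defs
  imports Complex_Main
begin

datatype letter = A | B

type_synonym word = "letter list"

definition W :: "nat \<Rightarrow> word set" where
  "W n = {w. count_list w A = n \<and> count_list w B = n \<and> length w = 2 * n}"

definition subword_count :: "word \<Rightarrow> word \<Rightarrow> nat" where
  "subword_count w v =
     card {I. I \<subseteq> {..<length w} \<and> card I = length v \<and> nths w I = v}"

definition ins_at :: "nat \<Rightarrow> letter \<Rightarrow> word \<Rightarrow> word" where
  "ins_at i x xs = take i xs @ x # drop i xs"

text \<open>k-step transition probabilities of the chain: from u, insert A uniformly into one of
  the length u + 1 slots, then B uniformly into one of the length u + 2 slots.\<close>
fun trans :: "nat \<Rightarrow> word \<Rightarrow> word \<Rightarrow> real" where
  "trans 0 u w = (if u = w then 1 else 0)"
| "trans (Suc k) u w =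
     (\<Sum>i\<le>length u. \<Sum>j\<le>Suc (length u). trans k (ins_at j B (ins_at i A u)) w)
       / (real (length u + 1) * real (length u + 2))"

text \<open>Probability that the chain started at u ever hits w. Since the length grows by
  exactly 2 at each step, w can only be hit at the single time (|w|-|u|)/2.\<close>
definition hit_prob :: "word \<Rightarrow> word \<Rightarrow> real" where
  "hit_prob u w = (if length u \<le> length w \<and> even (length w - length u)
                   then trans ((length w - length u) div 2) u w else 0)"

definition martin_K :: "word \<Rightarrow> word \<Rightarrow> real" where
  "martin_K v w = hit_prob v w / hit_prob [] w"

end

theory Submission imports Defs begin

fun sc :: "word \<Rightarrow> word \<Rightarrow> nat" where
  "sc [] ys = (if ys = [] then 1 else 0)"
| "sc (x#xs) [] = sc xs []"
| "sc (x#xs) (y#ys) = sc xs (y#ys) + (if x = y then sc xs ys else 0)"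

definition SS :: "word \<Rightarrow> word \<Rightarrow> nat set set" where
  "SS w v = {I. I \<subseteq> {..<length w} \<and> card I = length v \<and> nths w I = v}"

lemma SS_Nil: "SS [] v = (if v = [] then {{}} else {})"
  by (auto simp: SS_def)

lemma Suc_pre: "0 \<notin> I \<Longrightarrow> I = Suc ` {j. Suc j \<in> I}"
  by (auto simp: image_iff) (metis not0_implies_Suc)

lemma Suc_pre0: "0 \<in> I \<Longrightarrow> I = insert 0 (Suc ` {j. Suc j \<in> I})"
  by (auto simp: image_iff) (metis not0_implies_Suc)

lemma pre_Suc: "{j. Suc j \<in> Suc ` J} = J" by auto
lemma pre_Suc0: "{j. Suc j \<in> insert 0 (Suc ` J)} = J" by auto

lemma SS_Cons1: "{I \<in> SS (x#xs) v. 0 \<notin> I} = (\<lambda>J. Suc ` J) ` SS xs v"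
proof (intro equalityI subsetI)
  fix I assume I: "I \<in> {I \<in> SS (x#xs) v. 0 \<notin> I}"
  hence 0: "0 \<notin> I" by auto
  let ?J = "{j. Suc j \<in> I}"
  have e: "I = Suc ` ?J" using Suc_pre[OF 0] .
  have c: "card ?J = card I" by (subst e, rule card_image[symmetric]) auto
  have "?J \<in> SS xs v" using I c by (auto simp: SS_def nths_Cons)
  thus "I \<in> (\<lambda>J. Suc ` J) ` SS xs v" using e by blast
next
  fix I assume "I \<in> (\<lambda>J. Suc ` J) ` SS xs v"
  then obtain J where J: "J \<in> SS xs v" "I = Suc ` J" by auto
  have "card I = card J" using J(2) by (simp add: card_image)
  thus "I \<in> {I \<in> SS (x#xs) v. 0 \<notin> I}" using J by (auto simp: SS_def nths_Cons pre_Suc)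
qed

lemma SS_Cons2: "{I \<in> SS (x#xs) v. 0 \<in> I} = (case v of [] \<Rightarrow> {} | y#v' \<Rightarrow>
   if x = y then (\<lambda>J. insert 0 (Suc ` J)) ` SS xs v' else {})"
proof (intro equalityI subsetI)
  fix I assume I: "I \<in> {I \<in> SS (x#xs) v. 0 \<in> I}"
  hence 0: "0 \<in> I" by auto
  let ?J = "{j. Suc j \<in> I}"
  have e: "I = insert 0 (Suc ` ?J)" using Suc_pre0[OF 0] .
  have fin: "finite ?J" using I by (auto simp: SS_def intro: finite_subset[of _ "{..<length xs}"])
  have c: "card I = Suc (card ?J)" by (subst e) (simp add: fin card_image)
  have n: "nths (x#xs) I = x # nths xs ?J" using 0 by (simp add: nths_Cons)
  have "v = x # nths xs ?J" using I n by (auto simp: SS_def)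
  moreover have "?J \<in> SS xs (nths xs ?J)" using I c calculation by (auto simp: SS_def)
  ultimately show "I \<in> (case v of [] \<Rightarrow> {} | y#v' \<Rightarrow>
   if x = y then (\<lambda>J. insert 0 (Suc ` J)) ` SS xs v' else {})" using e by auto
next
  fix I assume I: "I \<in> (case v of [] \<Rightarrow> {} | y#v' \<Rightarrow>
   if x = y then (\<lambda>J. insert 0 (Suc ` J)) ` SS xs v' else {})"
  then obtain v' J where J: "v = x # v'" "J \<in> SS xs v'" "I = insert 0 (Suc ` J)"
    by (auto split: list.splits if_splits)
  have fin: "finite J" using J by (auto simp: SS_def intro: finite_subset[of _ "{..<length xs}"])
  have "card I = Suc (card J)" using J(3) fin by (simp add: card_image)
  thus "I \<in> {I \<in> SS (x#xs) v. 0 \<in> I}" using J by (auto simp: SS_def nths_Cons pre_Suc0 pre_Suc)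
qed

lemma SS_fin: "finite (SS w v)"
  by (rule finite_subset[of _ "Pow {..<length w}"]) (auto simp: SS_def)

lemma card_SS: "card (SS w v) = sc w v"
proof (induction w arbitrary: v)
  case Nil thus ?case by (simp add: SS_Nil)
next
  case (Cons x xs)
  have split: "SS (x#xs) v = {I \<in> SS (x#xs) v. 0 \<notin> I} \<union> {I \<in> SS (x#xs) v. 0 \<in> I}" by auto
  have "card (SS (x#xs) v) = card {I \<in> SS (x#xs) v. 0 \<notin> I} + card {I \<in> SS (x#xs) v. 0 \<in> I}"
    by (subst split, rule card_Un_disjoint) (use SS_fin in auto)
  also have "card {I \<in> SS (x#xs) v. 0 \<notin> I} = sc xs v"
    unfolding SS_Cons1 by (subst card_image) (auto simp: inj_on_def Cons.IH inj_image_eq_iff)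
  also have "card {I \<in> SS (x#xs) v. 0 \<in> I} = (case v of [] \<Rightarrow> 0 | y#v' \<Rightarrow> if x = y then sc xs v' else 0)"
  proof (cases v)
    case (Cons y v')
    have "inj_on (\<lambda>J. insert 0 (Suc ` J)) (SS xs v')"
    proof (rule inj_onI)
      fix J1 J2 assume "insert 0 (Suc ` J1) = insert 0 (Suc ` J2)"
      hence "{j. Suc j \<in> insert 0 (Suc ` J1)} = {j. Suc j \<in> insert 0 (Suc ` J2)}" by simp
      thus "J1 = J2" by (simp only: pre_Suc0)
    qed
    thus ?thesis using Cons by (auto simp: SS_Cons2 card_image Cons.IH)
  qed (simp add: SS_Cons2)
  finally show ?case by (cases v) auto
qed

lemma subword_count_sc: "subword_count w v = sc w v"
  using card_SS by (simp add: subword_count_def SS_def)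


lemma ins0: "ins_at 0 x u = x # u" by (simp add: ins_at_def)
lemma insSuc: "ins_at (Suc i) x (y#u) = y # ins_at i x u" by (simp add: ins_at_def)
lemma ins_len: "i \<le> length u \<Longrightarrow> length (ins_at i x u) = Suc (length u)"
  by (simp add: ins_at_def)
lemma ins_count: "count_list (ins_at i x u) z = count_list u z + (if x = z then 1 else 0)"
proof -
  have "count_list u z = count_list (take i u) z + count_list (drop i u) z"
    by (metis append_take_drop_id count_list_append)
  thus ?thesis by (simp add: ins_at_def)
qed

lemma sc_Nil2: "sc w [] = 1" by (induction w) auto

lemma core: "(\<Sum>i\<le>length u. int (sc w (ins_at i x u))) =
   (int (count_list w x) - int (count_list u x)) * int (sc w u)"
proof (induction w arbitrary: u)
  case Nil
  have "\<And>i. sc [] (ins_at i x u) = 0" by (simp add: ins_at_def)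
  thus ?case by simp
next
  case (Cons c w)
  show ?case
  proof (cases u)
    case Nil
    have "sc w [x] = count_list w x" using Cons.IH[of "[]"] by (simp add: ins0 sc_Nil2)
    thus ?thesis using Nil by (simp add: ins0 sc_Nil2)
  next
    case (Cons y u')
    have s: "(\<Sum>i\<le>length u. g i) = g 0 + (\<Sum>i\<le>length u'. g (Suc i))" for g :: "nat \<Rightarrow> int"
      using Cons by (simp only: length_Cons sum.atMost_Suc_shift)
    have "(\<Sum>i\<le>length u. int (sc (c#w) (ins_at i x u))) =
       int (sc (c#w) (x#y#u')) + (\<Sum>i\<le>length u'. int (sc (c#w) (y # ins_at i x u')))"
      unfolding s using Cons by (simp only: ins0 insSuc)
    also have "\<dots> = int (sc w (x#y#u')) + (if c = x then int (sc w (y#u')) else 0)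
       + (\<Sum>i\<le>length u'. int (sc w (y # ins_at i x u')) + (if c = y then int (sc w (ins_at i x u')) else 0))"
      by (simp only: sc.simps of_nat_add of_nat_0 if_distrib[of int])
    also have "\<dots> = (\<Sum>i\<le>length u. int (sc w (ins_at i x u))) + (if c = x then int (sc w u) else 0)
       + (if c = y then (\<Sum>i\<le>length u'. int (sc w (ins_at i x u'))) else 0)"
      unfolding s using Cons by (cases "c = y") (simp_all add: sum.distrib ins0 insSuc)
    also have "\<dots> = (int (count_list (c#w) x) - int (count_list u x)) * int (sc (c#w) u)"
      unfolding Cons.IH using Cons by (auto simp: algebra_simps)
    finally show ?thesis .
  qed
qed

lemma core_real: "(\<Sum>i\<le>length u. real (sc w (ins_at i x u))) =
   (real (count_list w x) - real (count_list u x)) * real (sc w u)"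
proof -
  have "real_of_int (\<Sum>i\<le>length u. int (sc w (ins_at i x u))) =
     real_of_int ((int (count_list w x) - int (count_list u x)) * int (sc w u))"
    using core by simp
  thus ?thesis by simp
qed

lemma double:
  assumes "count_list w A = count_list u A + Suc k" "count_list w B = count_list u B + Suc k"
  shows "(\<Sum>i\<le>length u. \<Sum>j\<le>Suc (length u). real (sc w (ins_at j B (ins_at i A u))))
     = (real (Suc k))^2 * real (sc w u)"
proof -
  have "(\<Sum>i\<le>length u. \<Sum>j\<le>Suc (length u). real (sc w (ins_at j B (ins_at i A u))))
     = (\<Sum>i\<le>length u. real (Suc k) * real (sc w (ins_at i A u)))"
  proof (rule sum.cong)
    fix i assume "i \<in> {..length u}"
    hence "length (ins_at i A u) = Suc (length u)" by (simp add: ins_len)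
    thus "(\<Sum>j\<le>Suc (length u). real (sc w (ins_at j B (ins_at i A u)))) = real (Suc k) * real (sc w (ins_at i A u))"
      using core_real[where u="ins_at i A u" and w=w and x=B] assms by (simp add: ins_count)
  qed simp
  also have "\<dots> = real (Suc k) * (real (Suc k) * real (sc w u))"
    using core_real[where u=u and w=w and x=A] assms by (simp add: sum_distrib_left[symmetric])
  finally show ?thesis by (simp add: power2_eq_square)
qed

lemma sc_short: "length w < length u \<Longrightarrow> sc w u = 0"
  by (induction w u rule: sc.induct) auto

lemma sc_eqlen: "length w = length u \<Longrightarrow> sc w u = (if w = u then 1 else 0)"
proof (induction w u rule: sc.induct)
  case (3 x xs y ys) thus ?case by (auto simp: sc_short)
qed auto

lemma trans_formula:
  "length w = length u + 2*k \<Longrightarrow> count_list w A = count_list u A + k \<Longrightarrow>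
   count_list w B = count_list u B + k \<Longrightarrow>
   trans k u w = real (sc w u) * (fact k)^2 * fact (length u) / fact (length u + 2*k)"
proof (induction k arbitrary: u)
  case 0 thus ?case by (auto simp: sc_eqlen)
next
  case (Suc k)
  define L where "L = length u"
  define C :: real where "C = (fact k)^2 * fact (L+2) / fact (L + 2 + 2*k)"
  have "trans (Suc k) u w = (\<Sum>i\<le>L. \<Sum>j\<le>Suc L. real (sc w (ins_at j B (ins_at i A u))) * C)
       / (real (L + 1) * real (L + 2))"
    unfolding trans.simps L_def[symmetric]
  proof (intro arg_cong2[where f="(/)"] sum.cong refl)
    fix i j assume i: "i \<in> {..L}" and j: "j \<in> {..Suc L}"
    let ?u = "ins_at j B (ins_at i A u)"
    have l: "length ?u = L + 2" using i j by (simp add: ins_len L_def)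
    show "trans k ?u w = real (sc w ?u) * C"
      using Suc.IH[of ?u] Suc.prems l by (simp add: ins_count C_def L_def)
  qed
  also have "\<dots> = (real (Suc k))^2 * real (sc w u) * C / (real (L + 1) * real (L + 2))"
    using double[of w u k] Suc.prems by (simp add: sum_distrib_right[symmetric] L_def)
  also have "\<dots> = real (sc w u) * (fact (Suc k))^2 * fact L / fact (L + 2*Suc k)"
  proof -
    have f1: "fact (L+2) = real (L+2) * real (L+1) * (fact L :: real)"
      by (simp add: algebra_simps)
    have f2: "L + 2 * Suc k = L + 2 + 2*k" by simp
    have f3: "(fact (Suc k) :: real) = real (Suc k) * fact k" by simp
    have alg: "F > 0 \<Longrightarrow> a \<noteq> 0 \<Longrightarrow> b \<noteq> 0 \<Longrightarrow> q^2 * s * ((fk)^2 * (a * b * fL) / F) / (b * a)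
       = s * (q * fk)^2 * fL / F" for F s fk fL a b q :: real
      by (simp add: field_simps power2_eq_square)
    show ?thesis unfolding C_def f2 f1 f3 by (rule alg) simp_all
  qed
  finally show ?case by (simp add: L_def)
qed


theorem mainTheorem2:
  fixes m n :: nat and v w :: word
  assumes "v \<in> W m" and "w \<in> W (m + n)"
  shows "martin_K v w =
    real (subword_count w v) * real ((2 * m) choose m) / (real ((m + n) choose m))^2"
proof -
  have v: "count_list v A = m" "count_list v B = m" "length v = 2*m" using assms(1) by (auto simp: W_def)
  have w: "count_list w A = m+n" "count_list w B = m+n" "length w = 2*(m+n)" using assms(2) by (auto simp: W_def)
  have h1: "hit_prob v w = trans n v w" using v w by (simp add: hit_prob_def)
  have h2: "hit_prob [] w = trans (m+n) [] w" using w by (simp add: hit_prob_def)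
  have t1: "trans n v w = real (sc w v) * (fact n)^2 * fact (2*m) / fact (2*m + 2*n)"
    using trans_formula[of w v n] v w by simp
  have t2: "trans (m+n) [] w = (fact (m+n))^2 / fact (2*m + 2*n)"
    using trans_formula[of w "[]" "m+n"] w by (simp add: sc_Nil2)
  have b1: "real ((2 * m) choose m) = fact (2*m) / (fact m * fact m)"
    by (simp add: binomial_fact mult_2)
  have b2: "real ((m + n) choose m) = fact (m+n) / (fact m * fact n)"
    by (simp add: binomial_fact)
  have alg: "F > 0 \<Longrightarrow> fm > 0 \<Longrightarrow> fn > 0 \<Longrightarrow> fmn > 0 \<Longrightarrow>
     (s * fn^2 * f2m / F) / (fmn^2 / F) = s * (f2m / (fm * fm)) / (fmn / (fm * fn))^2"
    for F fm fn fmn f2m s :: real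
    by (simp add: field_simps power2_eq_square)
  show ?thesis unfolding martin_K_def h1 h2 t1 t2 b1 b2 subword_count_sc
    by (rule alg) simp_all
qed

end
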